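(* Let $p$ be a prime. Let $X$ be a finite group with a core-free subgroup $Y$ and a normal subgroup $N$; let $G=X/N$ with quotient map $x\mapsto\overline{x}$ and let $H=\overline{Y}$. Suppose $H$ is core-free in $G$ and that $G$, acting transitively on the right cosets of $H$, is not $p$-elusive. If $X$, acting transitively on the right cosets of $Y$, is $p$-elusive, then $X$ does not split over $N$ (that is, $N$ has no complement in $X$).
   Context: A derangement is a permutation with no fixed points. For a prime $p$, a transitive permutation group is $p$-elusive if it has no derangements of order $p$. *)

theory Defs
  imports "HOL-Algebra.Multiplicative_Group" "HOL-Computational_Algebra.Primes"
begin

definition core_free :: "('a, 'b) monoid_scheme \<Rightarrow> 'a set \<Rightarrow> bool" where
  "core_free G H \<longleftrightarrow>
     (\<Inter>g\<in>carrier G. {inv\<^bsub>G\<^esub> g \<otimes>\<^bsub>G\<^esub> h \<otimes>\<^bsub>G\<^esub> g | h. h \<in> H}) = {\<one>\<^bsub>G\<^esub>}"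

definition derangement_on_cosets :: "('a, 'b) monoid_scheme \<Rightarrow> 'a set \<Rightarrow> 'a \<Rightarrow> bool" where
  "derangement_on_cosets G H g \<longleftrightarrow>
     g \<in> carrier G \<and> (\<forall>C \<in> rcosets\<^bsub>G\<^esub> H. C #>\<^bsub>G\<^esub> g \<noteq> C)"

definition p_elusive_on_cosets :: "('a, 'b) monoid_scheme \<Rightarrow> 'a set \<Rightarrow> nat \<Rightarrow> bool" where
  "p_elusive_on_cosets G H p \<longleftrightarrow>
     \<not> (\<exists>g \<in> carrier G. group.ord G g = p \<and> derangement_on_cosets G H g)"

definition splits_over :: "('a, 'b) monoid_scheme \<Rightarrow> 'a set \<Rightarrow> bool" where
  "splits_over X N \<longleftrightarrow>
     (\<exists>K. subgroup K X \<and> K \<inter> N = {one X} \<and> set_mult X N K = carrier X)"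

end

theory Submission
  imports Defs
begin

lemma img_rcos:
  assumes "N \<lhd> X" "S \<subseteq> carrier X" "k \<in> carrier X"
  shows "((\<lambda>z. N #>\<^bsub>X\<^esub> z) ` S) #>\<^bsub>X Mod N\<^esub> (N #>\<^bsub>X\<^esub> k)
         = (\<lambda>z. N #>\<^bsub>X\<^esub> z) ` (S #>\<^bsub>X\<^esub> k)"
proof -
  interpret normal N X by fact
  show ?thesis
    unfolding r_coset_def[of "X Mod N"]
    using assms(2,3) by (auto simp: rcos_sum r_coset_def[of X S] subset_iff)
qed

theorem lemma2p3:
  fixes X :: "('a, 'b) monoid_scheme" and Y N :: "'a set" and p :: nat
  assumes "prime p"
    and "group X" and "finite (carrier X)"
    and "subgroup Y X" and "core_free X Y"
    and "N \<lhd> X"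
    and "core_free (X Mod N) ((\<lambda>y. N #>\<^bsub>X\<^esub> y) ` Y)"
    and "\<not> p_elusive_on_cosets (X Mod N) ((\<lambda>y. N #>\<^bsub>X\<^esub> y) ` Y) p"
    and "p_elusive_on_cosets X Y p"
  shows "\<not> splits_over X N"
proof
  assume "splits_over X N"
  then obtain K where K: "subgroup K X" "K \<inter> N = {\<one>\<^bsub>X\<^esub>}" "N <#>\<^bsub>X\<^esub> K = carrier X"
    unfolding splits_over_def by blast
  interpret normal N X by fact
  interpret Q: group "X Mod N" by (rule factorgroup_is_group)
  let ?H = "(\<lambda>y. N #>\<^bsub>X\<^esub> y) ` Y"
  obtain gb where gb: "gb \<in> carrier (X Mod N)" "Q.ord gb = p" "derangement_on_cosets (X Mod N) ?H gb"
    using assms(8) unfolding p_elusive_on_cosets_def by blast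
  obtain g where g: "g \<in> carrier X" "gb = N #>\<^bsub>X\<^esub> g"
    using gb(1) unfolding carrier_FactGroup by blast
  obtain n k where nk: "n \<in> N" "k \<in> K" "g = n \<otimes>\<^bsub>X\<^esub> k"
  proof -
    have "g \<in> N <#>\<^bsub>X\<^esub> K" using g(1) K(3) by simp
    then show ?thesis using that unfolding set_mult_def by blast
  qed
  have kc: "k \<in> carrier X" using K(1) nk(2) by (rule subgroup.mem_carrier)
  have nc: "n \<in> carrier X" using nk(1) by (rule mem_carrier)
  have gbk: "gb = N #>\<^bsub>X\<^esub> k"
  proof -
    have "N #>\<^bsub>X\<^esub> g = (N #>\<^bsub>X\<^esub> n) #>\<^bsub>X\<^esub> k" using nk nc kc by (simp add: coset_mult_assoc subset)
    also have "N #>\<^bsub>X\<^esub> n = N" using nk nc by (simp add: coset_join2 is_subgroup)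
    finally show ?thesis using g by simp
  qed
  have pw: "(N #>\<^bsub>X\<^esub> k) [^]\<^bsub>X Mod N\<^esub> m = \<one>\<^bsub>X Mod N\<^esub> \<longleftrightarrow> k [^]\<^bsub>X\<^esub> m = \<one>\<^bsub>X\<^esub>" for m :: nat
  proof -
    have km: "k [^]\<^bsub>X\<^esub> m \<in> K" proof (induction m)
      case 0 show ?case using K(1) by (simp add: subgroup.one_closed)
    next
      case (Suc m) then show ?case using K(1) nk(2) by (simp add: subgroup.m_closed)
    qed
    have kmc: "k [^]\<^bsub>X\<^esub> m \<in> carrier X" using kc by simp
    have "(N #>\<^bsub>X\<^esub> k) [^]\<^bsub>X Mod N\<^esub> m = N #>\<^bsub>X\<^esub> (k [^]\<^bsub>X\<^esub> m)" using kc by (rule FactGroup_pow)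
    moreover have "N #>\<^bsub>X\<^esub> (k [^]\<^bsub>X\<^esub> m) = N \<longleftrightarrow> k [^]\<^bsub>X\<^esub> m \<in> N"
      using coset_join1[OF _ kmc is_subgroup] coset_join2[OF kmc is_subgroup] by blast
    moreover have "k [^]\<^bsub>X\<^esub> m \<in> N \<longleftrightarrow> k [^]\<^bsub>X\<^esub> m = \<one>\<^bsub>X\<^esub>" using km K(2) by auto
    ultimately show ?thesis by simp
  qed
  have ordk: "group.ord X k = p"
  proof -
    have "Q.ord (N #>\<^bsub>X\<^esub> k) = group.ord X k"
    proof (rule dvd_antisym)
      show "Q.ord (N #>\<^bsub>X\<^esub> k) dvd group.ord X k"
        using pw[of "group.ord X k"] kc gbk gb(1) by (simp add: Q.pow_eq_id[symmetric])
      show "group.ord X k dvd Q.ord (N #>\<^bsub>X\<^esub> k)"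
        using pw[of "Q.ord (N #>\<^bsub>X\<^esub> k)"] kc gbk gb(1) by (simp add: pow_eq_id[symmetric])
    qed
    then show ?thesis using gb(2) gbk by simp
  qed
  have "derangement_on_cosets X Y k"
    unfolding derangement_on_cosets_def
  proof (intro conjI ballI kc)
    fix C assume C: "C \<in> rcosets\<^bsub>X\<^esub> Y"
    then obtain x where x: "x \<in> carrier X" "C = Y #>\<^bsub>X\<^esub> x" unfolding RCOSETS_def by blast
    have Ys: "Y \<subseteq> carrier X" using assms(4) subgroup.subset by blast
    have Cs: "C \<subseteq> carrier X" using x Ys r_coset_subset_G by blast
    show "C #>\<^bsub>X\<^esub> k \<noteq> C"
    proof
      assume eq: "C #>\<^bsub>X\<^esub> k = C"
      let ?C' = "?H #>\<^bsub>X Mod N\<^esub> (N #>\<^bsub>X\<^esub> x)"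
      have C'1: "?C' = (\<lambda>z. N #>\<^bsub>X\<^esub> z) ` C" using img_rcos[OF assms(6) Ys x(1)] x by simp
      have "?C' \<in> rcosets\<^bsub>X Mod N\<^esub> ?H"
      proof (rule Q.rcosetsI)
        show "N #>\<^bsub>X\<^esub> x \<in> carrier (X Mod N)" unfolding carrier_FactGroup using x(1) by blast
        show "?H \<subseteq> carrier (X Mod N)" unfolding carrier_FactGroup using Ys by blast
      qed
      moreover have "?C' #>\<^bsub>X Mod N\<^esub> gb = ?C'"
        using img_rcos[OF assms(6) Cs kc] C'1 gbk eq by simp
      ultimately show False using gb(3) unfolding derangement_on_cosets_def by blast
    qed
  qed
  then show False using assms(9) ordk kc unfolding p_elusive_on_cosets_def by blast
qed

end
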